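(* Let $a_*\in\mathbb{R}\setminus\{0\}$ and $f_*\in C^2([-1,1]\times(\mathbb{R}\setminus\{-a_*\}))$ be such that \[ \partial_yf_*(1,a)=\frac{1-i(a_*+a)}{2i(a_*+a)}f_*(1,a)\quad\text{for all }a\in\mathbb{R}\setminus\{-a_*\}. \] Then $\mathcal R(a_*+a,f_*(\cdot,a))\in Y$ for all $a\in\mathbb{R}\setminus\{-a_*\}$, and the map $a\mapsto \mathcal R(a_*+a,f_*(\cdot,a))$ from $\mathbb{R}\setminus\{-a_*\}$ to $Y$ is continuous.
   Context: $Y$ is the vector space of all $f\in C(-1,1)$ (complex valued) such that $y\mapsto(1+y)(1-y)^2f(y)$ extends to a continuous function on $[-1,1]$, with norm $\|f\|_Y:=\sup_{y\in(-1,1)}(1+y)(1-y)^2|f(y)|$. For $\alpha\in\mathbb{R}\setminus\{0\}$, $f\in C^2(-1,1)$ and $y\in(-1,1)$, \[ \mathcal R(\alpha,f)(y):=f''(y)+p_0(y,\alpha)f'(y)+q_0(y,\alpha)f(y)+\frac{f(y)|f(y)|^2}{(1-y)^2}, \] where \[ p_0(y,\alpha):=\frac{4i\alpha}{(1-y)^3}-\frac{2i\alpha}{(1-y)^2}-\frac{2+\frac{2i}{\alpha}}{1-y}+\frac{2}{1+y},\qquad q_0(y,\alpha):=-\frac{2-2i\alpha}{(1-y)^3}-\frac{\frac{1}{\alpha^2}-\frac{i}{\alpha}}{(1-y)^2}-\frac{1+\frac{i}{\alpha}}{1-y}-\frac{1+\frac{i}{\alpha}}{1+y}. \] Here $f_*(\cdot,a)$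 denotes $y\mapsto f_*(y,a)$. *)

theory Defs
  imports "HOL-Analysis.Analysis"
begin

definition wY :: "real \<Rightarrow> real" where
  "wY y = (1 + y) * (1 - y)^2"

definition in_Y :: "(real \<Rightarrow> complex) \<Rightarrow> bool" where
  "in_Y f \<longleftrightarrow> continuous_on {-1<..<1} f \<and>
     (\<exists>g. continuous_on {-1..1} g \<and> (\<forall>y\<in>{-1<..<1}. g y = of_real (wY y) * f y))"

definition normY :: "(real \<Rightarrow> complex) \<Rightarrow> real" where
  "normY f = (SUP y\<in>{-1<..<1}. wY y * cmod (f y))"

definition p0 :: "real \<Rightarrow> real \<Rightarrow> complex" where
  "p0 y \<alpha> = 4 * \<i> * of_real \<alpha> / of_real ((1 - y)^3)
           - 2 * \<i> * of_real \<alpha> / of_real ((1 - y)^2)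
           - (2 + 2 * \<i> / of_real \<alpha>) / of_real (1 - y)
           + 2 / of_real (1 + y)"

definition q0 :: "real \<Rightarrow> real \<Rightarrow> complex" where
  "q0 y \<alpha> = - (2 - 2 * \<i> * of_real \<alpha>) / of_real ((1 - y)^3)
           - (1 / of_real (\<alpha>^2) - \<i> / of_real \<alpha>) / of_real ((1 - y)^2)
           - (1 + \<i> / of_real \<alpha>) / of_real (1 - y)
           - (1 + \<i> / of_real \<alpha>) / of_real (1 + y)"

definition Rop :: "real \<Rightarrow> (real \<Rightarrow> complex) \<Rightarrow> real \<Rightarrow> complex" where
  "Rop \<alpha> f y =
     vector_derivative (\<lambda>t. vector_derivative f (at t)) (at y)
     + p0 y \<alpha> * vector_derivative f (at y)
     + q0 y \<alpha> * f y
     + f y * of_real ((cmod (f y))^2) / of_real ((1 - y)^2)"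

text \<open>C^2 on a (not necessarily open) set S of the plane: f is the restriction
  to S of a function that is twice continuously Frechet differentiable on an
  open neighbourhood of S.\<close>
definition C2_on :: "(real \<times> real) set \<Rightarrow> (real \<times> real \<Rightarrow> complex) \<Rightarrow> bool" where
  "C2_on S f \<longleftrightarrow>
     (\<exists>V g (Df :: real \<times> real \<Rightarrow> (real \<times> real) \<Rightarrow>\<^sub>L complex)
          (D2f :: real \<times> real \<Rightarrow> (real \<times> real) \<Rightarrow>\<^sub>L ((real \<times> real) \<Rightarrow>\<^sub>L complex)).
        open V \<and> S \<subseteq> V \<and> (\<forall>x\<in>S. g x = f x) \<and>
        (\<forall>x\<in>V. (g has_derivative blinfun_apply (Df x)) (at x)) \<and>
        (\<forall>x\<in>V. (Df has_derivative blinfun_apply (D2f x)) (at x)) \<and>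
        continuous_on V D2f)"

end

theory Submission
  imports Defs
begin

lemma pd:
  fixes G :: "real \<times> real \<Rightarrow> 'b::real_normed_vector"
  assumes "(G has_derivative blinfun_apply D) (at (t, c))"
  shows "((\<lambda>s. G (s, c)) has_vector_derivative blinfun_apply D (1,0)) (at t)"
proof -
  have 1: "((\<lambda>s. (s, c)) has_derivative (\<lambda>h. (h, 0))) (at t)"
    by (auto intro!: derivative_eq_intros)
  have "((G \<circ> (\<lambda>s. (s, c))) has_derivative (blinfun_apply D \<circ> (\<lambda>h. (h, 0)))) (at t)"
    by (rule diff_chain_at[OF 1]) (simp add: assms)
  moreover have "(blinfun_apply D \<circ> (\<lambda>h. (h, 0))) = (\<lambda>h. h *\<^sub>R blinfun_apply D (1,0))"
  proof
    fix h :: real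
    have "(h, 0::real) = h *\<^sub>R (1, 0)" by simp
    then show "(blinfun_apply D \<circ> (\<lambda>h. (h, 0))) h = h *\<^sub>R blinfun_apply D (1,0)"
      by (metis blinfun.scaleR_right comp_apply)
  qed
  ultimately show ?thesis by (simp add: has_vector_derivative_def comp_def)
qed

lemma Hcont:
  fixes k k' :: "real \<times> real \<Rightarrow> complex" and U :: "real set"
  assumes ck: "continuous_on ({-1..1::real} \<times> U) k" and ck': "continuous_on ({-1..1::real} \<times> U) k'"
  and dk: "\<And>t a. t \<in> {-1..1} \<Longrightarrow> a \<in> U \<Longrightarrow> ((\<lambda>s. k (s,a)) has_vector_derivative k' (t,a)) (at t)"
  and k1: "\<And>a. a\<in>U \<Longrightarrow> k (1,a) = 0"
  shows "continuous_on ({-1..1::real} \<times> U) (\<lambda>x. if fst x = 1 then - k' (1, snd x) else k x / of_real (1 - fst x))"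
  unfolding continuous_on_eq_continuous_within
proof
  fix p assume pT: "p \<in> {-1..1::real} \<times> U"
  obtain y0 a1 where p: "p = (y0, a1)" by force
  show "continuous (at p within {-1..1::real} \<times> U) (\<lambda>x. if fst x = 1 then - k' (1, snd x) else k x / of_real (1 - fst x))"
  proof (cases "y0 = 1")
    case False
    then have y0: "y0 < 1" using pT p by auto
    have c1: "continuous (at p within {-1..1::real} \<times> U) k" using ck pT continuous_on_eq_continuous_within by blast
    have c2: "continuous (at p within {-1..1::real} \<times> U) (\<lambda>x. of_real (1 - fst x) :: complex)"
      by (intro continuous_intros)
    have "continuous (at p within {-1..1::real} \<times> U) (\<lambda>x. k x / of_real (1 - fst x))"
      using c1 c2 y0 p by (intro continuous_at_within_divide) auto
    then show ?thesis
    proof (rule continuous_transform_within[where \<delta> = "1 - y0"])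
      show "0 < 1 - y0" using y0 by simp
      show "p \<in> {-1..1::real} \<times> U" by fact
      fix x' assume "x' \<in> {-1..1::real} \<times> U" "dist x' p < 1 - y0"
      then have "dist (fst x') y0 < 1 - y0" using dist_fst_le[of x' p] p by auto
      then have "fst x' \<noteq> 1" by (auto simp: dist_real_def)
      then show "k x' / of_real (1 - fst x') = (if fst x' = 1 then - k' (1, snd x') else k x' / of_real (1 - fst x'))"
        by simp
    qed
  next
    case True
    have a1U: "a1 \<in> U" using pT p by auto
    have ck'p: "continuous (at (1,a1) within {-1..1::real} \<times> U) k'" using ck' pT p True continuous_on_eq_continuous_within by blast
    show ?thesis unfolding continuous_within_eps_delta
    proof (intro allI impI)
      fix e :: real assume e: "e > 0"
      obtain d where d: "d > 0" and dd: "\<And>x'. x' \<in> {-1..1::real} \<times> U \<Longrightarrow> dist x' (1,a1) < d \<Longrightarrow> dist (k' x') (k' (1,a1)) < e/2"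
        using ck'p[unfolded continuous_within_eps_delta, rule_format, of "e/2"] e by auto
      show "\<exists>d>0. \<forall>x'\<in>{-1..1::real} \<times> U. dist x' p < d \<longrightarrow>
          dist (if fst x' = 1 then - k' (1, snd x') else k x' / of_real (1 - fst x'))
               (if fst p = 1 then - k' (1, snd p) else k p / of_real (1 - fst p)) < e"
      proof (intro exI[of _ d] conjI ballI impI d)
        fix x' assume x'T: "x' \<in> {-1..1::real} \<times> U" and dx': "dist x' p < d"
        obtain y a where x': "x' = (y, a)" by force
        have aU: "a \<in> U" and yI: "y \<in> {-1..1}" using x'T x' by auto
        show "dist (if fst x' = 1 then - k' (1, snd x') else k x' / of_real (1 - fst x'))
               (if fst p = 1 then - k' (1, snd p) else k p / of_real (1 - fst p)) < e"
        proof (cases "y = 1")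
          case True
          then have "dist (k' x') (k' (1,a1)) < e/2" using dd x'T dx' p \<open>y0=1\<close> by auto
          then show ?thesis using True x' p \<open>y0=1\<close> e
            by (simp add: dist_norm norm_minus_commute)
        next
          case False
          then have y1: "y < 1" using yI by auto
          define \<phi> where "\<phi> t = k (t, a) - t *\<^sub>R k' (1, a1)" for t
          have der: "(\<phi> has_derivative (\<lambda>h. h *\<^sub>R (k' (t,a) - k' (1,a1)))) (at t within {y..1})"
            if "t \<in> {y..1}" for t
          proof -
            have "t \<in> {-1..1}" using that yI by auto
            then have "((\<lambda>s. k (s,a)) has_vector_derivative k' (t,a)) (at t within {y..1})"
              using dk aU has_vector_derivative_at_within by blast
            then have "(\<phi> has_vector_derivative (k' (t,a) - k' (1,a1))) (at t within {y..1})"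
              unfolding \<phi>_def by (auto intro!: derivative_eq_intros)
            then show ?thesis by (simp add: has_vector_derivative_def)
          qed
          have bnd: "onorm (\<lambda>h. h *\<^sub>R (k' (t,a) - k' (1,a1))) \<le> e/2" if "t \<in> {y..1}" for t
          proof -
            have tT: "(t,a) \<in> {-1..1::real} \<times> U" using that yI aU by auto
            have "dist (t,a) (1,a1) \<le> dist (y,a) (1,a1)"
              using that y1 by (auto simp: dist_Pair_Pair dist_real_def intro!: real_sqrt_le_mono)
            then have "dist (t,a) (1,a1) < d" using dx' x' p \<open>y0=1\<close> by auto
            then have "norm (k' (t,a) - k' (1,a1)) < e/2" using dd[OF tT] by (simp add: dist_norm)
            moreover have "onorm (\<lambda>h::real. h *\<^sub>R (k' (t,a) - k' (1,a1))) = norm (k' (t,a) - k' (1,a1))"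
              using onorm_scaleR_left[OF bounded_linear_ident] by (simp add: onorm_id)
            ultimately show ?thesis by simp
          qed
          have "norm (\<phi> 1 - \<phi> y) \<le> e/2 * norm (1 - y)"
            by (rule differentiable_bound[OF convex_real_interval(5) der bnd]) (use y1 in auto)
          then have "norm (k (1,a) - k (y,a) - (1 - y) *\<^sub>R k' (1,a1)) \<le> e/2 * (1 - y)"
            using y1 by (simp add: \<phi>_def algebra_simps)
          then have A: "norm (k (y,a) + (1 - y) *\<^sub>R k' (1,a1)) \<le> e/2 * (1 - y)"
            proof -
            have "k (1,a) - k (y,a) - (1 - y) *\<^sub>R k' (1,a1) = - (k (y,a) + (1 - y) *\<^sub>R k' (1,a1))"
              using k1[OF aU] by simp
            then show ?thesis using \<open>norm (k (1,a) - k (y,a) - (1 - y) *\<^sub>R k' (1,a1)) \<le> e/2 * (1 - y)\<close>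
              by (simp only: norm_minus_cancel)
          qed
          have "k (y,a) / of_real (1 - y) + k' (1,a1) = (k (y,a) + (1 - y) *\<^sub>R k' (1,a1)) / of_real (1 - y)"
            using y1 by (simp add: field_simps scaleR_conv_of_real)
          moreover have "cmod (1 - complex_of_real y) = 1 - y"
            using y1 by (metis of_real_1 of_real_diff norm_of_real abs_of_pos diff_gt_0_iff_gt)
          ultimately have "norm (k (y,a) / of_real (1 - y) + k' (1,a1)) \<le> e/2"
            using A y1 by (simp add: norm_divide divide_le_eq)
          then show ?thesis using False x' p \<open>y0=1\<close> e by (simp add: dist_norm)
        qed
      qed
    qed
  qed
qed

lemma gen: "(x::complex)*(a+p*b+q*c+n) = x*a + (x*p)*b + (x*q)*c + x*n"
  by (simp add: algebra_simps)

lemma alg: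
  fixes D E A G G1 G11 H NN :: complex
  assumes D: "D \<noteq> 0" and E: "E \<noteq> 0" and A: "A \<noteq> 0"
    and HH: "H = (4*\<i>*A*G1 - (2 - 2*\<i>*A)*G) / D"
  shows "E*D^2 * (G11
     + (4 * \<i> * A / D^3 - 2 * \<i> * A / D^2 - (2 + 2 * \<i> / A) / D + 2 / E) * G1
     + (- (2 - 2 * \<i> * A) / D^3 - (1 / A^2 - \<i> / A) / D^2 - (1 + \<i> / A) / D - (1 + \<i> / A) / E) * G
     + G * NN / D^2)
   = E*D^2 * G11
     + (E * (-2*\<i>*A - (2 + 2*\<i>/A) * D) + 2*D^2) * G1
     + (E * (-(1/A^2 - \<i>/A) - (1+\<i>/A)*D) - (1+\<i>/A)*D^2) * G
     + E * H + E * (G * NN)"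
proof -
  have P: "E*D^2 * (4 * \<i> * A / D^3 - 2 * \<i> * A / D^2 - (2 + 2 * \<i> / A) / D + 2 / E)
     = E * 4 * \<i> * A / D + (E * (-2*\<i>*A - (2 + 2*\<i>/A) * D) + 2*D^2)"
    using D E by (simp add: field_simps power2_eq_square power3_eq_cube)
  have Q: "E*D^2 * (- (2 - 2 * \<i> * A) / D^3 - (1 / A^2 - \<i> / A) / D^2 - (1 + \<i> / A) / D - (1 + \<i> / A) / E)
     = E * (- (2 - 2 * \<i> * A)) / D + (E * (-(1/A^2 - \<i>/A) - (1+\<i>/A)*D) - (1+\<i>/A)*D^2)"
    using D E by (simp add: field_simps power2_eq_square power3_eq_cube)
  have N: "E*D^2 * (G * NN / D^2) = E * (G * NN)" using D by simp
  have Hx: "E * 4 * \<i> * A / D * G1 + E * (- (2 - 2 * \<i> * A)) / D * G = E * H"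
    unfolding HH using D by (simp add: field_simps)
  have "E*D^2 * (G11
     + (4 * \<i> * A / D^3 - 2 * \<i> * A / D^2 - (2 + 2 * \<i> / A) / D + 2 / E) * G1
     + (- (2 - 2 * \<i> * A) / D^3 - (1 / A^2 - \<i> / A) / D^2 - (1 + \<i> / A) / D - (1 + \<i> / A) / E) * G
     + G * NN / D^2) = E*D^2*G11 + (E*D^2 * (4 * \<i> * A / D^3 - 2 * \<i> * A / D^2 - (2 + 2 * \<i> / A) / D + 2 / E)) * G1
     + (E*D^2 * (- (2 - 2 * \<i> * A) / D^3 - (1 / A^2 - \<i> / A) / D^2 - (1 + \<i> / A) / D - (1 + \<i> / A) / E)) * G
     + E*D^2 * (G * NN / D^2)"
    by (rule gen)
  also have "\<dots> = E*D^2 * G11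
     + (E * (-2*\<i>*A - (2 + 2*\<i>/A) * D) + 2*D^2) * G1
     + (E * (-(1/A^2 - \<i>/A) - (1+\<i>/A)*D) - (1+\<i>/A)*D^2) * G
     + (E * 4 * \<i> * A / D * G1 + E * (- (2 - 2 * \<i> * A)) / D * G) + E * (G * NN)"
    unfolding P Q N by (simp add: algebra_simps)
  also have "\<dots> = E*D^2 * G11
     + (E * (-2*\<i>*A - (2 + 2*\<i>/A) * D) + 2*D^2) * G1
     + (E * (-(1/A^2 - \<i>/A) - (1+\<i>/A)*D) - (1+\<i>/A)*D^2) * G
     + E * H + E * (G * NN)"
    unfolding Hx ..
  finally show ?thesis .
qed

theorem lemma3p5:
  fixes astar :: real and fstar :: "real \<times> real \<Rightarrow> complex"
  assumes astar_nz: "astar \<noteq> 0"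
    and C2: "C2_on ({-1..1} \<times> (UNIV - {-astar})) fstar"
    and bc: "\<forall>a. a \<noteq> -astar \<longrightarrow>
       ((\<lambda>y. fstar (y, a)) has_vector_derivative
          ((1 - \<i> * of_real (astar + a)) / (2 * \<i> * of_real (astar + a)) * fstar (1, a)))
         (at 1 within {-1..1})"
  shows "(\<forall>a. a \<noteq> -astar \<longrightarrow> in_Y (Rop (astar + a) (\<lambda>y. fstar (y, a))))
    \<and> (\<forall>a0. a0 \<noteq> -astar \<longrightarrow>
         ((\<lambda>a. normY (\<lambda>y. Rop (astar + a) (\<lambda>y. fstar (y, a)) y
                          - Rop (astar + a0) (\<lambda>y. fstar (y, a0)) y)) \<longlongrightarrow> 0)
           (at a0 within (UNIV - {-astar})))"
proof -
  define U where "U = UNIV - {-astar}"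
  define S where "S = {-1..1::real} \<times> U"
  obtain V g and Df :: "real \<times> real \<Rightarrow> (real \<times> real) \<Rightarrow>\<^sub>L complex"
     and D2f :: "real \<times> real \<Rightarrow> (real \<times> real) \<Rightarrow>\<^sub>L ((real \<times> real) \<Rightarrow>\<^sub>L complex)"
    where oV: "open V" and SV: "S \<subseteq> V" and gf: "\<And>x. x \<in> S \<Longrightarrow> g x = fstar x"
      and dg: "\<And>x. x \<in> V \<Longrightarrow> (g has_derivative blinfun_apply (Df x)) (at x)"
      and dDf: "\<And>x. x \<in> V \<Longrightarrow> (Df has_derivative blinfun_apply (D2f x)) (at x)"
      and cD2: "continuous_on V D2f"
    using C2 unfolding C2_on_def S_def U_def by metis
  define g1 where "g1 x = blinfun_apply (Df x) (1,0)" for x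
  define g11 where "g11 x = blinfun_apply (blinfun_apply (D2f x) (1,0)) (1,0)" for x
  have cg: "continuous_on V g"
    using dg has_derivative_continuous by (metis continuous_at_imp_continuous_on)
  have cDf: "continuous_on V Df"
    using dDf has_derivative_continuous by (metis continuous_at_imp_continuous_on)
  have cg1: "continuous_on V g1" unfolding g1_def by (intro continuous_intros cDf)
  have cg11: "continuous_on V g11" unfolding g11_def by (intro continuous_intros cD2)
  have d1: "((\<lambda>s. g (s,a)) has_vector_derivative g1 (t,a)) (at t)" if "(t,a) \<in> V" for t a
    unfolding g1_def by (rule pd) (use dg that in auto)
  have d2: "((\<lambda>s. g1 (s,a)) has_vector_derivative g11 (t,a)) (at t)" if "(t,a) \<in> V" for t a
  proof -
    have "((\<lambda>s. Df (s,a)) has_vector_derivative blinfun_apply (D2f (t,a)) (1,0)) (at t)"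
      by (rule pd) (use dDf that in auto)
    from blinfun.bounded_linear_left[THEN bounded_linear.has_vector_derivative, OF this, of "(1,0)"]
    show ?thesis unfolding g1_def g11_def .
  qed
  define al where "al a = complex_of_real (astar + a)" for a
  have alnz: "al a \<noteq> 0" if "a \<in> U" for a using that unfolding al_def U_def
    by (metis Diff_iff add_eq_0_iff of_real_add of_real_eq_0_iff singletonI)
  define h where "h x = 4*\<i>*al (snd x) * g1 x - (2 - 2*\<i>*al (snd x)) * g x" for x
  define h' where "h' x = 4*\<i>*al (snd x) * g11 x - (2 - 2*\<i>*al (snd x)) * g1 x" for x
  define H where "H x = (if fst x = 1 then - h' (1, snd x) else h x / of_real (1 - fst x))" for x
  define W where "W x = of_real (1 + fst x) * (of_real (1 - fst x))^2 * g11 x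
     + (of_real (1 + fst x) * (-2*\<i>*al (snd x) - (2 + 2*\<i>/al (snd x)) * of_real (1 - fst x)) + 2* (of_real (1 - fst x))^2) * g1 x
     + (of_real (1 + fst x) * (-(1/(al (snd x))^2 - \<i>/al (snd x)) - (1+\<i>/al (snd x))* of_real (1 - fst x)) - (1+\<i>/al (snd x))* (of_real (1 - fst x))^2) * g x
     + of_real (1 + fst x) * H x + of_real (1 + fst x) * (g x * of_real ((cmod (g x))^2))" for x
  have cal: "continuous_on S (\<lambda>x. al (snd x))" unfolding al_def by (intro continuous_intros)
  have calnz: "\<forall>x\<in>S. al (snd x) \<noteq> 0" using alnz unfolding S_def by auto
  have cgS: "continuous_on S g" "continuous_on S g1" "continuous_on S g11"
    using cg cg1 cg11 SV continuous_on_subset by blast+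
  have cH: "continuous_on S H"
    unfolding H_def S_def
  proof (rule Hcont)
    show "continuous_on ({- 1..1} \<times> U) h"
      unfolding h_def using cal cgS unfolding S_def by (intro continuous_intros) auto
    show "continuous_on ({- 1..1} \<times> U) h'"
      unfolding h'_def using cal cgS unfolding S_def by (intro continuous_intros) auto
    show "((\<lambda>s. h (s, a)) has_vector_derivative h' (t, a)) (at t)" if "t \<in> {-1..1}" "a \<in> U" for t a
    proof -
      have "(t,a) \<in> V" using that SV unfolding S_def by auto
      then show ?thesis unfolding h_def h'_def using d1 d2
        by (auto intro!: derivative_eq_intros)
    qed
    show "h (1, a) = 0" if aU: "a \<in> U" for a
    proof -
      define c where "c = (1 - \<i> * al a) / (2 * \<i> * al a)"
      have "a \<noteq> - astar" using aU unfolding U_def by auto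
      then have b1: "((\<lambda>y. fstar (y, a)) has_vector_derivative c * fstar (1, a)) (at 1 within {-1..1})"
        using bc unfolding c_def al_def by auto
      have g1a: "g (1, a) = fstar (1, a)" using gf aU unfolding S_def by auto
      have b2: "((\<lambda>y. g (y, a)) has_vector_derivative c * g (1, a)) (at 1 within {-1..1})"
        unfolding g1a
        by (rule has_vector_derivative_transform_within[OF b1, of 1]) (use gf aU in \<open>auto simp: S_def\<close>)
      have "(1,a) \<in> V" using aU SV unfolding S_def by auto
      then have b3: "((\<lambda>y. g (y, a)) has_vector_derivative g1 (1, a)) (at 1 within {-1..1})"
        using d1 has_vector_derivative_at_within by blast
      have "g1 (1,a) = c * g (1,a)"
        by (rule vector_derivative_unique_within_closed_interval[of "-1" 1 1]) (use b2 b3 in auto)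
      then have E: "2 * \<i> * al a * g1 (1,a) = (1 - \<i> * al a) * g (1,a)"
        unfolding c_def using alnz[OF aU] by (simp add: field_simps)
      have "h (1,a) = 2 * (2 * \<i> * al a * g1 (1,a)) - (2 - 2 * \<i> * al a) * g (1,a)"
        unfolding h_def by (simp add: algebra_simps)
      also have "\<dots> = 0" unfolding E by (simp add: algebra_simps)
      finally show ?thesis .
    qed
  qed
  have cW: "continuous_on S W"
    unfolding W_def using cal calnz cgS cH by (intro continuous_intros) auto
  have key: "of_real (wY y) * Rop (astar + a) (\<lambda>y. fstar (y, a)) y = W (y,a)"
    if yI: "y \<in> {-1<..<1}" and aU: "a \<in> U" for y a
  proof -
    have tV: "(t,a) \<in> V" if "t \<in> {-1<..<1}" for t using that aU SV unfolding S_def by auto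
    have fg: "g (t,a) = fstar (t,a)" if "t \<in> {-1<..<1}" for t using that aU gf unfolding S_def by auto
    have f1: "((\<lambda>y. fstar (y,a)) has_vector_derivative g1 (t,a)) (at t)" if "t \<in> {-1<..<1}" for t
      by (rule has_vector_derivative_transform_within_open[OF d1[OF tV[OF that]] open_greaterThanLessThan that])
        (use fg in auto)
    have vd: "vector_derivative (\<lambda>y. fstar (y,a)) (at t) = g1 (t,a)" if "t \<in> {-1<..<1}" for t
      using f1[OF that] by (rule vector_derivative_at)
    have f2: "((\<lambda>t. vector_derivative (\<lambda>y. fstar (y,a)) (at t)) has_vector_derivative g11 (y,a)) (at y)"
      by (rule has_vector_derivative_transform_within_open[OF d2[OF tV[OF yI]] open_greaterThanLessThan yI])
        (use vd in auto)
    have R: "Rop (astar + a) (\<lambda>y. fstar (y, a)) y = g11 (y,a) + p0 y (astar + a) * g1 (y,a)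
       + q0 y (astar + a) * g (y,a) + g (y,a) * of_real ((cmod (g (y,a)))^2) / of_real ((1 - y)^2)"
      unfolding Rop_def vector_derivative_at[OF f2] vd[OF yI] fg[OF yI] ..
    define D where "D = complex_of_real (1 - y)"
    define E where "E = complex_of_real (1 + y)"
    have Dnz: "D \<noteq> 0" using yI unfolding D_def by auto
    have Enz: "E \<noteq> 0" unfolding E_def of_real_eq_0_iff using yI by auto
    have Hy: "H (y,a) = (4*\<i>*al a*g1 (y,a) - (2 - 2*\<i>*al a)*g (y,a)) / D"
      using yI unfolding H_def h_def D_def by auto
    have "of_real (wY y) * Rop (astar + a) (\<lambda>y. fstar (y, a)) y
      = E*D^2 * (g11 (y,a)
     + (4 * \<i> * al a / D^3 - 2 * \<i> * al a / D^2 - (2 + 2 * \<i> / al a) / D + 2 / E) * g1 (y,a)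
     + (- (2 - 2 * \<i> * al a) / D^3 - (1 / (al a)^2 - \<i> / al a) / D^2 - (1 + \<i> / al a) / D - (1 + \<i> / al a) / E) * g (y,a)
     + g (y,a) * of_real ((cmod (g (y,a)))^2) / D^2)"
      unfolding R wY_def p0_def q0_def al_def D_def E_def by (simp add: mult.assoc)
    also have "\<dots> = E*D^2 * g11 (y,a)
     + (E * (-2*\<i>*al a - (2 + 2*\<i>/al a) * D) + 2*D^2) * g1 (y,a)
     + (E * (-(1/(al a)^2 - \<i>/al a) - (1+\<i>/al a)*D) - (1+\<i>/al a)*D^2) * g (y,a)
     + E * H (y,a) + E * (g (y,a) * of_real ((cmod (g (y,a)))^2))"
      by (rule alg[OF Dnz Enz alnz[OF aU] Hy])
    also have "\<dots> = W (y,a)" unfolding W_def D_def E_def by simp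
    finally show ?thesis .
  qed
  have wpos: "wY y > 0" if "y \<in> {-1<..<1}" for y using that unfolding wY_def by auto
  have cWa: "continuous_on {-1..1} (\<lambda>y. W (y,a))" if aU: "a \<in> U" for a
    by (rule continuous_on_compose2[OF cW]) (use aU in \<open>auto simp: S_def intro!: continuous_intros\<close>)
  have part1: "in_Y (Rop (astar + a) (\<lambda>y. fstar (y, a)))" if aU: "a \<in> U" for a
    unfolding in_Y_def
  proof
    have "continuous_on {-1<..<1} (\<lambda>y. W (y,a) / of_real (wY y))"
    proof (rule continuous_on_divide)
      show "continuous_on {-1<..<1} (\<lambda>y. W (y,a))"
        by (rule continuous_on_subset[OF cWa[OF aU]]) auto
      show "continuous_on {-1<..<1} (\<lambda>y. complex_of_real (wY y))"
        unfolding wY_def by (intro continuous_intros)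
      show "\<forall>y\<in>{-1<..<1}. complex_of_real (wY y) \<noteq> 0" using wpos by (metis less_irrefl of_real_eq_0_iff)
    qed
    then show "continuous_on {-1<..<1} (Rop (astar + a) (\<lambda>y. fstar (y, a)))"
    proof (rule continuous_on_eq)
      fix y :: real assume y: "y \<in> {-1<..<1}"
      show "W (y,a) / of_real (wY y) = Rop (astar + a) (\<lambda>y. fstar (y, a)) y"
        using key[OF y aU] wpos[OF y] by (auto simp: field_simps)
    qed
    show "\<exists>ga. continuous_on {-1..1} ga \<and> (\<forall>y\<in>{-1<..<1}. ga y = of_real (wY y) * Rop (astar + a) (\<lambda>y. fstar (y, a)) y)"
      using cWa[OF aU] key aU by auto
  qed
  have part2: "((\<lambda>a. normY (\<lambda>y. Rop (astar + a) (\<lambda>y. fstar (y, a)) y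
                          - Rop (astar + a0) (\<lambda>y. fstar (y, a0)) y)) \<longlongrightarrow> 0)
           (at a0 within U)" if a0U: "a0 \<in> U" for a0
  proof -
    define \<delta> where "\<delta> = \<bar>astar + a0\<bar> / 2"
    have \<delta>: "\<delta> > 0" using a0U unfolding \<delta>_def U_def by auto
    define K where "K = {-1..1::real} \<times> cball a0 \<delta>"
    have KS: "K \<subseteq> S"
    proof
      fix x assume "x \<in> K"
      then have "fst x \<in> {-1..1}" "dist a0 (snd x) \<le> \<delta>" unfolding K_def by (auto simp: mem_cball)
      moreover have "\<bar>astar + a0\<bar> > 0" using \<delta> unfolding \<delta>_def by simp
      ultimately show "x \<in> S" unfolding S_def U_def \<delta>_def by (cases x) (auto simp: dist_real_def add.commute)
    qed
    have uc: "uniformly_continuous_on K W"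
      by (rule compact_uniformly_continuous[OF continuous_on_subset[OF cW KS]])
        (simp add: K_def compact_Times)
    show ?thesis unfolding Lim_within
    proof (intro allI impI)
      fix e :: real assume e: "e > 0"
      obtain d where d: "d > 0" and dd: "\<And>x x'. x \<in> K \<Longrightarrow> x' \<in> K \<Longrightarrow> dist x' x < d \<Longrightarrow> dist (W x') (W x) < e/2"
        using uc[unfolded uniformly_continuous_on_def, rule_format, of "e/2"] e by auto
      show "\<exists>d>0. \<forall>x\<in>U. 0 < dist x a0 \<and> dist x a0 < d \<longrightarrow>
          dist (normY (\<lambda>y. Rop (astar + x) (\<lambda>y. fstar (y, x)) y - Rop (astar + a0) (\<lambda>y. fstar (y, a0)) y)) 0 < e"
      proof (intro exI[of _ "min d \<delta>"] conjI ballI impI)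
        show "0 < min d \<delta>" using d \<delta> by simp
        fix a assume aU: "a \<in> U" and da: "0 < dist a a0 \<and> dist a a0 < min d \<delta>"
        define F where "F y = wY y * cmod (Rop (astar + a) (\<lambda>y. fstar (y, a)) y - Rop (astar + a0) (\<lambda>y. fstar (y, a0)) y)" for y
        have Fb: "F y \<le> e/2" if y: "y \<in> {-1<..<1}" for y
        proof -
          have "F y = cmod (of_real (wY y) * Rop (astar + a) (\<lambda>y. fstar (y, a)) y - of_real (wY y) * Rop (astar + a0) (\<lambda>y. fstar (y, a0)) y)"
            unfolding F_def using wpos[OF y] by (simp add: right_diff_distrib[symmetric] norm_mult)
          also have "\<dots> = dist (W (y,a)) (W (y,a0))" using key[OF y aU] key[OF y a0U] by (simp add: dist_norm)
          also have "\<dots> < e/2"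
          proof (rule dd)
            show "(y,a0) \<in> K" using y \<delta> unfolding K_def by auto
            show "(y,a) \<in> K" using y da unfolding K_def by (auto simp: mem_cball dist_commute)
            show "dist (y,a) (y,a0) < d" using da by (simp add: dist_Pair_Pair)
          qed
          finally show ?thesis by simp
        qed
        have F0: "F y \<ge> 0" if "y \<in> {-1<..<1}" for y unfolding F_def using wpos[OF that] by simp
        have ub: "(SUP y\<in>{-1<..<1}. F y) \<le> e/2" by (rule cSUP_least) (use Fb in auto)
        have bdd: "bdd_above (F ` {-1<..<1})" by (rule bdd_aboveI2[where M="e/2"]) (use Fb in auto)
        have lb: "0 \<le> (SUP y\<in>{-1<..<1}. F y)"
          using cSUP_upper[OF _ bdd, of 0] F0[of 0] by simp
        show "dist (normY (\<lambda>y. Rop (astar + a) (\<lambda>y. fstar (y, a)) y - Rop (astar + a0) (\<lambda>y. fstar (y, a0)) y)) 0 < e"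
          unfolding normY_def F_def[symmetric] using ub lb e by (simp add: dist_real_def)
      qed
    qed
  qed
  show ?thesis using part1 part2 unfolding U_def by auto
qed


end
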